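(* Consider a trained binary-classifier neural network with $N$ hidden neurons, a validation dataset of size $S$ with a binary sensitive attribute, integers $0 \le n_l < n_u \le N$, the search space $\mathcal{S} = \{ s \in \{0,1\}^N : n_l \le HW(s) \le n_u\}$, a threshold multiplier $t \in (0,1)$ and a penalty multiplier $p > 1$, and the cost function $$\mathrm{cost}(s) = EOD_s + p \cdot EOD_{s_0} \cdot \mathbf{1}(F1_s < t \cdot F1_{s_0}).$$ Run simulated annealing on $\mathcal{S}$ with this cost, neighborhood $\Gamma(s) = \{s' \in \mathcal{S} : HD(s,s')=1\}$, and logarithmic cooling schedule $T_m = T_0/\log(2+m)$, where $T_0 \ge (1 + p \cdot EOD_{s_0})(n_u - n_l)$. Then there is a constant $A > 0$ such that for every $k > \lceil \frac{n_u - n_l}{2} \rceil$, the probability that simulated annealing finds a global minimum of $\mathrm{cost}$ over $\mathcal{S}$ within $k$ iterations is greater than $$1 - \frac{A}{\left(\frac{k}{n_u - n_l}\right)^{c}}, \qquad \text{where } c := \min\left( \frac{1}{(n_u - n_l) N^{\lceil \frac{n_u - n_l}{2} \rceil}}, \frac{4}{T_0 S^2} \right).$$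
   Context: A state $s \in \{0,1\}^N$ specifies which hidden neurons are dropped ($s_i = 1$ iff neuron $i$ is dropped, i.e. its output is set to $0$); $s_0$ denotes the all-zero state (the original network without dropout). $HW$ is Hamming weight and $HD$ Hamming distance. For a state $s$, $EOD_s$ and $F1_s$ are the Equalized Odds Difference and F1 score of the network with the neurons of $s$ dropped, evaluated on the validation dataset: with sensitive attribute $A \in \{0,1\}$, label $Y$ and prediction $h(X)$, $EOD = \max\big(|P[h(X)=1 \mid A=0,Y=1] - P[h(X)=1 \mid A=1,Y=1]|,\ |P[h(X)=1 \mid A=0,Y=0] - P[h(X)=1 \mid A=1,Y=0]|\big)$ (empirical probabilities), and $F1 = \frac{2TP}{2TP+FP+FN}$. $\mathbf{1}(\cdot)$ is the indicator function. Simulated annealing: start from some state in $\mathcal{S}$; at iteration $m = 0,1,2,\dots$, from current state $s$ sample $s'$ uniformly from $\Gamma(s)$, compute $\Delta E = \mathrm{cost}(s') - \mathrm{cost}(s)$, move to $s'$ if $\Delta E \le 0$, and otherwise move to $s'$ with probability $e^{-\Delta E/T_m}$ (else stay at $s$). "Finds a global minimum within $k$ iterations" means that some state visited in the first $k$ iterations minimizes $\mathrm{cost}$ over $\mathcal{S}$. *)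

theory Defs
  imports "HOL-Probability.Probability"
begin

text \<open>Dropout states: boolean lists of length N; entry i is True iff hidden neuron i is dropped.
  The trained network is abstracted as a function
  h :: bool list => 'x => bool giving the predicted label of input x when the neurons
  marked in the state are dropped.  The validation dataset is a list of triples
  (features, sensitive attribute A, label Y); its size S is its length.\<close>

definition HW :: "bool list \<Rightarrow> nat" where
  "HW s = length (filter id s)"

definition HD :: "bool list \<Rightarrow> bool list \<Rightarrow> nat" where
  "HD s s' = card {i. i < length s \<and> s ! i \<noteq> s' ! i}"

definition s0 :: "nat \<Rightarrow> bool list" where
  "s0 N = replicate N False"

text \<open>Empirical P[h(X)=1 | A=a, Y=y] (convention: 0 if the conditioning group is empty).\<close>
definition cond_rate ::
  "(bool list \<Rightarrow> 'x \<Rightarrow> bool) \<Rightarrow> ('x \<times> bool \<times> bool) list \<Rightarrow> bool list \<Rightarrow> bool \<Rightarrow> bool \<Rightarrow> real" where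
  "cond_rate h D s a y =
     real (length (filter (\<lambda>(x, a', y'). a' = a \<and> y' = y \<and> h s x) D)) /
     real (length (filter (\<lambda>(x, a', y'). a' = a \<and> y' = y) D))"

definition EOD ::
  "(bool list \<Rightarrow> 'x \<Rightarrow> bool) \<Rightarrow> ('x \<times> bool \<times> bool) list \<Rightarrow> bool list \<Rightarrow> real" where
  "EOD h D s = max \<bar>cond_rate h D s False True - cond_rate h D s True True\<bar>
                   \<bar>cond_rate h D s False False - cond_rate h D s True False\<bar>"

definition TP :: "(bool list \<Rightarrow> 'x \<Rightarrow> bool) \<Rightarrow> ('x \<times> bool \<times> bool) list \<Rightarrow> bool list \<Rightarrow> nat" where
  "TP h D s = length (filter (\<lambda>(x, a, y). y \<and> h s x) D)"
definition FP :: "(bool list \<Rightarrow> 'x \<Rightarrow> bool) \<Rightarrow> ('x \<times> bool \<times> bool) list \<Rightarrow> bool list \<Rightarrow> nat" where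
  "FP h D s = length (filter (\<lambda>(x, a, y). \<not> y \<and> h s x) D)"
definition FN :: "(bool list \<Rightarrow> 'x \<Rightarrow> bool) \<Rightarrow> ('x \<times> bool \<times> bool) list \<Rightarrow> bool list \<Rightarrow> nat" where
  "FN h D s = length (filter (\<lambda>(x, a, y). y \<and> \<not> h s x) D)"

text \<open>F1 score (convention: 0 if the denominator is 0).\<close>
definition F1 :: "(bool list \<Rightarrow> 'x \<Rightarrow> bool) \<Rightarrow> ('x \<times> bool \<times> bool) list \<Rightarrow> bool list \<Rightarrow> real" where
  "F1 h D s = 2 * real (TP h D s) / (2 * real (TP h D s) + real (FP h D s) + real (FN h D s))"

definition indicator_bool :: "bool \<Rightarrow> real" where
  "indicator_bool b = (if b then 1 else 0)"

definition cost ::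
  "nat \<Rightarrow> real \<Rightarrow> real \<Rightarrow> (bool list \<Rightarrow> 'x \<Rightarrow> bool) \<Rightarrow> ('x \<times> bool \<times> bool) list \<Rightarrow> bool list \<Rightarrow> real" where
  "cost N p t h D s = EOD h D s + p * EOD h D (s0 N) * indicator_bool (F1 h D s < t * F1 h D (s0 N))"

definition search_space :: "nat \<Rightarrow> nat \<Rightarrow> nat \<Rightarrow> bool list set" where
  "search_space N nl nu = {s. length s = N \<and> nl \<le> HW s \<and> HW s \<le> nu}"

definition nbhd :: "nat \<Rightarrow> nat \<Rightarrow> nat \<Rightarrow> bool list \<Rightarrow> bool list set" where
  "nbhd N nl nu s = {s' \<in> search_space N nl nu. HD s s' = 1}"

definition sa_step ::
  "('s \<Rightarrow> real) \<Rightarrow> ('s \<Rightarrow> 's set) \<Rightarrow> (nat \<Rightarrow> real) \<Rightarrow> nat \<Rightarrow> 's \<Rightarrow> 's pmf" where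
  "sa_step E G T m s =
     bind_pmf (pmf_of_set (G s)) (\<lambda>s'.
       let dE = E s' - E s in
       if dE \<le> 0 then return_pmf s'
       else map_pmf (\<lambda>b. if b then s' else s) (bernoulli_pmf (exp (- dE / T m))))"

fun sa_run ::
  "('s \<Rightarrow> real) \<Rightarrow> ('s \<Rightarrow> 's set) \<Rightarrow> (nat \<Rightarrow> real) \<Rightarrow> 's \<Rightarrow> nat \<Rightarrow> 's list pmf" where
  "sa_run E G T init 0 = return_pmf [init]"
| "sa_run E G T init (Suc m) =
     bind_pmf (sa_run E G T init m) (\<lambda>xs. map_pmf (\<lambda>s'. xs @ [s']) (sa_step E G T m (last xs)))"

definition is_global_min :: "('s \<Rightarrow> real) \<Rightarrow> 's set \<Rightarrow> 's \<Rightarrow> bool" where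
  "is_global_min E SS s \<longleftrightarrow> s \<in> SS \<and> (\<forall>s'\<in>SS. E s \<le> E s')"

end

theory Submission
  imports Defs
begin

definition nrm :: "'s set \<Rightarrow> ('s \<Rightarrow> real) \<Rightarrow> ('s \<Rightarrow> real) \<Rightarrow> real" where
  "nrm X w f = (\<Sum>x\<in>X. w x * (f x)\<^sup>2)"

definition Mco :: "'s set \<Rightarrow> ('s \<Rightarrow> real) \<Rightarrow> ('s \<Rightarrow> 's \<Rightarrow> real) \<Rightarrow> 's \<Rightarrow> 's \<Rightarrow> real" where
  "Mco A w K y x = (if y \<in> A \<or> x \<in> A then 0 else w y * K y x)"

definition Bf :: "'s set \<Rightarrow> 's set \<Rightarrow> ('s \<Rightarrow> real) \<Rightarrow> ('s \<Rightarrow> 's \<Rightarrow> real) \<Rightarrow> ('s \<Rightarrow> real) \<Rightarrow> ('s \<Rightarrow> real) \<Rightarrow> real" where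
  "Bf X A w K g h = (\<Sum>y\<in>X. \<Sum>x\<in>X. Mco A w K y x * g y * h x)"

definition Pop :: "'s set \<Rightarrow> 's set \<Rightarrow> ('s \<Rightarrow> 's \<Rightarrow> real) \<Rightarrow> ('s \<Rightarrow> real) \<Rightarrow> 's \<Rightarrow> real" where
  "Pop X A K h y = (if y \<in> A then 0 else (\<Sum>x\<in>X. K y x * (if x \<in> A then 0 else h x)))"

definition Dir :: "'s set \<Rightarrow> ('s \<Rightarrow> real) \<Rightarrow> ('s \<Rightarrow> 's \<Rightarrow> real) \<Rightarrow> ('s \<Rightarrow> real) \<Rightarrow> real" where
  "Dir X w K f = (\<Sum>y\<in>X. \<Sum>x\<in>X. w y * K y x * (f y - f x)\<^sup>2) / 2"

lemma Bf_Pop: "Bf X A w K g h = (\<Sum>y\<in>X. w y * g y * Pop X A K h y)"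
  unfolding Bf_def Pop_def Mco_def
  by (auto simp: sum_distrib_left intro!: sum.cong simp: algebra_simps)

lemma Bf_scale: "Bf X A w K (\<lambda>y. c * g y) h = c * Bf X A w K g h"
  unfolding Bf_def by (simp add: sum_distrib_left algebra_simps)

lemma Bf_sym:
  assumes db: "\<And>x y. x \<in> X \<Longrightarrow> y \<in> X \<Longrightarrow> w x * K x y = w y * K y x"
  shows "Bf X A w K g h = Bf X A w K h g"
proof -
  have "Bf X A w K g h = (\<Sum>x\<in>X. \<Sum>y\<in>X. Mco A w K y x * g y * h x)"
    unfolding Bf_def by (rule sum.swap)
  also have "\<dots> = Bf X A w K h g"
    unfolding Bf_def
    by (intro sum.cong refl) (auto simp: Mco_def db)
  finally show ?thesis .
qed

lemma Bf_polar:
  "Bf X A w K (\<lambda>x. g x + h x) (\<lambda>x. g x + h x) - Bf X A w K (\<lambda>x. g x - h x) (\<lambda>x. g x - h x)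
   = 2 * Bf X A w K g h + 2 * Bf X A w K h g"
proof -
  have e: "\<And>y x. Mco A w K y x * (g y + h y) * (g x + h x) - Mco A w K y x * (g y - h y) * (g x - h x)
      = 2 * (Mco A w K y x * g y * h x) + 2 * (Mco A w K y x * h y * g x)"
    by algebra
  show ?thesis
    unfolding Bf_def
    by (simp add: sum_subtractf[symmetric] sum.distrib[symmetric] sum_distrib_left e)
qed

lemma nrm_par: "nrm X w (\<lambda>x. g x + h x) + nrm X w (\<lambda>x. g x - h x) = 2 * nrm X w g + 2 * nrm X w h"
  unfolding nrm_def
  by (simp add: sum.distrib[symmetric] sum_distrib_left power2_eq_square algebra_simps)

lemma nrm_nonneg: "(\<And>x. x \<in> X \<Longrightarrow> w x \<ge> 0) \<Longrightarrow> nrm X w f \<ge> 0"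
  unfolding nrm_def by (intro sum_nonneg) auto

lemma Dir_ident:
  assumes fin: "finite X"
    and st: "\<And>y. y \<in> X \<Longrightarrow> (\<Sum>x\<in>X. K y x) = 1"
    and db: "\<And>x y. x \<in> X \<Longrightarrow> y \<in> X \<Longrightarrow> w x * K x y = w y * K y x"
  shows "Dir X w K f = nrm X w f - (\<Sum>y\<in>X. \<Sum>x\<in>X. w y * K y x * f y * f x)"
proof -
  have e: "\<And>y x. w y * K y x * (f y - f x)\<^sup>2 = w y * K y x * (f y)\<^sup>2 + w y * K y x * (f x)\<^sup>2 - 2 * (w y * K y x * f y * f x)"
    by (simp add: power2_eq_square algebra_simps)
  have s1: "(\<Sum>y\<in>X. \<Sum>x\<in>X. w y * K y x * (f y)\<^sup>2) = nrm X w f"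
    unfolding nrm_def
  proof (intro sum.cong refl)
    fix y assume y: "y \<in> X"
    have "(\<Sum>x\<in>X. w y * K y x * (f y)\<^sup>2) = (\<Sum>x\<in>X. K y x) * (w y * (f y)\<^sup>2)"
      by (simp add: sum_distrib_right sum_distrib_left mult.commute mult.left_commute mult.assoc)
    then show "(\<Sum>x\<in>X. w y * K y x * (f y)\<^sup>2) = w y * (f y)\<^sup>2" using st[OF y] by simp
  qed
  have s2: "(\<Sum>y\<in>X. \<Sum>x\<in>X. w y * K y x * (f x)\<^sup>2) = nrm X w f"
  proof -
    have "(\<Sum>y\<in>X. \<Sum>x\<in>X. w y * K y x * (f x)\<^sup>2) = (\<Sum>x\<in>X. \<Sum>y\<in>X. w y * K y x * (f x)\<^sup>2)"
      by (rule sum.swap)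
    also have "\<dots> = (\<Sum>x\<in>X. \<Sum>y\<in>X. w x * K x y * (f x)\<^sup>2)"
      by (intro sum.cong refl) (simp add: db)
    also have "\<dots> = nrm X w f" using s1 by simp
    finally show ?thesis .
  qed
  show ?thesis
    unfolding Dir_def
    by (simp add: e sum_subtractf sum.distrib sum_distrib_left[symmetric] s1 s2)
qed

lemma Bf_self:
  "Bf X A w K h h = (\<Sum>y\<in>X. \<Sum>x\<in>X. w y * K y x * (if y \<in> A then 0 else h y) * (if x \<in> A then 0 else h x))"
  unfolding Bf_def Mco_def by (intro sum.cong refl) auto

lemma Bf_abs:
  assumes "\<And>x. x \<in> X \<Longrightarrow> w x \<ge> 0" "\<And>x y. x \<in> X \<Longrightarrow> y \<in> X \<Longrightarrow> K x y \<ge> 0"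
  shows "\<bar>Bf X A w K h h\<bar> \<le> Bf X A w K (\<lambda>x. \<bar>h x\<bar>) (\<lambda>x. \<bar>h x\<bar>)"
proof -
  have "\<bar>Bf X A w K h h\<bar> \<le> (\<Sum>y\<in>X. \<bar>\<Sum>x\<in>X. Mco A w K y x * h y * h x\<bar>)"
    unfolding Bf_def by (rule sum_abs)
  also have "\<dots> \<le> (\<Sum>y\<in>X. \<Sum>x\<in>X. \<bar>Mco A w K y x * h y * h x\<bar>)"
    by (intro sum_mono sum_abs)
  also have "\<dots> = Bf X A w K (\<lambda>x. \<bar>h x\<bar>) (\<lambda>x. \<bar>h x\<bar>)"
    unfolding Bf_def
    by (intro sum.cong refl) (auto simp: Mco_def abs_mult assms)
  finally show ?thesis .
qed

lemma contraction:
  assumes fin: "finite X"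
    and wpos: "\<And>x. x \<in> X \<Longrightarrow> w x > 0"
    and Kpos: "\<And>x y. x \<in> X \<Longrightarrow> y \<in> X \<Longrightarrow> K x y \<ge> 0"
    and st: "\<And>y. y \<in> X \<Longrightarrow> (\<Sum>x\<in>X. K y x) = 1"
    and db: "\<And>x y. x \<in> X \<Longrightarrow> y \<in> X \<Longrightarrow> w x * K x y = w y * K y x"
    and poinc: "\<And>f. (\<And>x. x \<in> X \<Longrightarrow> x \<in> A \<Longrightarrow> f x = 0) \<Longrightarrow> \<delta> * nrm X w f \<le> Dir X w K f"
    and d0: "0 \<le> \<delta>" and d1: "\<delta> \<le> 1/2"
  shows "nrm X w (Pop X A K h) \<le> (1 - \<delta>)\<^sup>2 * nrm X w h"
proof -
  define lam where "lam = 1 - \<delta>"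
  have l0: "lam > 0" "lam \<le> 1" using d0 d1 by (auto simp: lam_def)
  have w0: "\<And>x. x \<in> X \<Longrightarrow> w x \<ge> 0" using wpos less_imp_le by blast
  have quad: "Bf X A w K f f \<le> lam * nrm X w f" for f
  proof -
    define ft where "ft = (\<lambda>x. if x \<in> A then 0 else f x)"
    have "Bf X A w K f f = (\<Sum>y\<in>X. \<Sum>x\<in>X. w y * K y x * ft y * ft x)"
      unfolding Bf_self ft_def ..
    also have "\<dots> = nrm X w ft - Dir X w K ft"
      using Dir_ident[OF fin st db, of ft] by simp
    also have "\<dots> \<le> nrm X w ft - \<delta> * nrm X w ft"
      using poinc[of ft] by (auto simp: ft_def)
    also have "\<dots> = lam * nrm X w ft" by (simp add: lam_def algebra_simps)
    also have "nrm X w ft \<le> nrm X w f"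
      unfolding nrm_def ft_def by (intro sum_mono) (auto intro!: mult_nonneg_nonneg w0)
    hence "lam * nrm X w ft \<le> lam * nrm X w f" using l0 by (intro mult_left_mono) auto
    finally show ?thesis .
  qed
  have absq: "\<bar>Bf X A w K f f\<bar> \<le> lam * nrm X w f" for f
  proof -
    have "\<bar>Bf X A w K f f\<bar> \<le> Bf X A w K (\<lambda>x. \<bar>f x\<bar>) (\<lambda>x. \<bar>f x\<bar>)"
      by (rule Bf_abs[OF w0 Kpos])
    also have "\<dots> \<le> lam * nrm X w (\<lambda>x. \<bar>f x\<bar>)" by (rule quad)
    also have "nrm X w (\<lambda>x. \<bar>f x\<bar>) = nrm X w f" unfolding nrm_def by simp
    finally show ?thesis .
  qed
  have pol: "2 * Bf X A w K g f \<le> lam * (nrm X w g + nrm X w f)" for g f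
  proof -
    have "4 * Bf X A w K g f = Bf X A w K (\<lambda>x. g x + f x) (\<lambda>x. g x + f x) - Bf X A w K (\<lambda>x. g x - f x) (\<lambda>x. g x - f x)"
      using Bf_polar[of X A w K g f] Bf_sym[OF db, where A=A and g=g and h=f] by simp
    also have "\<dots> \<le> lam * nrm X w (\<lambda>x. g x + f x) + lam * nrm X w (\<lambda>x. g x - f x)"
      using absq[of "\<lambda>x. g x + f x"] absq[of "\<lambda>x. g x - f x"] by linarith
    also have "\<dots> = lam * (nrm X w (\<lambda>x. g x + f x) + nrm X w (\<lambda>x. g x - f x))"
      by (simp only: distrib_left)
    also have "\<dots> = 2 * lam * (nrm X w g + nrm X w f)"
      unfolding nrm_par by simp
    finally show ?thesis by simp
  qed
  define a where "a = nrm X w (Pop X A K h)"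
  define b where "b = nrm X w h"
  have "Bf X A w K (Pop X A K h) h = a"
    unfolding a_def Bf_Pop nrm_def by (intro sum.cong refl) (simp add: power2_eq_square algebra_simps)
  then have e2: "Bf X A w K (\<lambda>y. (1/lam) * Pop X A K h y) h = (1/lam) * a"
    using Bf_scale[of X A w K "1/lam" "Pop X A K h" h] by simp
  have e1: "nrm X w (\<lambda>y. (1/lam) * Pop X A K h y) = (1/lam)\<^sup>2 * a"
    unfolding nrm_def a_def by (simp add: sum_distrib_left power_divide field_simps)
  have "2 * (1/lam) * a \<le> lam * ((1/lam)\<^sup>2 * a + b)"
    using pol[of "\<lambda>y. (1/lam) * Pop X A K h y" h] unfolding e1 e2 b_def by simp
  then have "2 * a / lam \<le> a / lam + lam * b" using l0
    by (simp add: power2_eq_square field_simps)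
  then have "a / lam \<le> lam * b" by simp
  then have "a \<le> lam * lam * b" using l0 by (simp add: field_simps)
  then show ?thesis unfolding a_def b_def lam_def by (simp add: power2_eq_square)
qed

fun is_path :: "('s \<Rightarrow> 's \<Rightarrow> bool) \<Rightarrow> 's list \<Rightarrow> bool" where
  "is_path R [] = False"
| "is_path R [x] = True"
| "is_path R (x # y # r) = (R x y \<and> is_path R (y # r))"

lemma path_bound:
  assumes "is_path R ps" "\<And>u v. R u v \<Longrightarrow> \<bar>f u - f v\<bar> \<le> s" "f (last ps) = 0"
  shows "\<bar>f (hd ps)\<bar> \<le> real (length ps - 1) * s"
  using assms
proof (induction R ps rule: is_path.induct)
  case (1 R) then show ?case by simp
next
  case (2 R x) then show ?case by simp
next
  case (3 R x y r)
  have "\<bar>f y\<bar> \<le> real (length (y # r) - 1) * s" using 3 by simp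
  moreover have "\<bar>f x - f y\<bar> \<le> s" using 3 by simp
  ultimately show ?case by (simp add: algebra_simps)
qed

lemma Dir_nonneg:
  assumes "\<And>x. x \<in> X \<Longrightarrow> w x \<ge> 0" "\<And>x y. x \<in> X \<Longrightarrow> y \<in> X \<Longrightarrow> K x y \<ge> 0"
  shows "Dir X w K f \<ge> 0"
  unfolding Dir_def by (intro divide_nonneg_nonneg sum_nonneg mult_nonneg_nonneg assms) auto

lemma Dir_term:
  assumes fin: "finite X" and "\<And>x. x \<in> X \<Longrightarrow> w x \<ge> 0" "\<And>x y. x \<in> X \<Longrightarrow> y \<in> X \<Longrightarrow> K x y \<ge> 0"
    and u: "u \<in> X" and v: "v \<in> X"
  shows "w u * K u v * (f u - f v)\<^sup>2 \<le> 2 * Dir X w K f"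
proof -
  have "w u * K u v * (f u - f v)\<^sup>2 \<le> (\<Sum>x\<in>X. w u * K u x * (f u - f x)\<^sup>2)"
    by (rule member_le_sum[OF v]) (auto intro!: mult_nonneg_nonneg assms)
  also have "\<dots> \<le> (\<Sum>y\<in>X. \<Sum>x\<in>X. w y * K y x * (f y - f x)\<^sup>2)"
    by (rule member_le_sum[OF u]) (auto intro!: sum_nonneg mult_nonneg_nonneg assms fin)
  finally show ?thesis unfolding Dir_def by simp
qed

lemma poincare_paths:
  assumes fin: "finite X"
    and w0: "\<And>x. x \<in> X \<Longrightarrow> w x \<ge> 0" and K0: "\<And>x y. x \<in> X \<Longrightarrow> y \<in> X \<Longrightarrow> K x y \<ge> 0"
    and q: "q > 0"
    and paths: "\<And>x. x \<in> X \<Longrightarrow> x \<notin> A \<Longrightarrow> \<exists>ps. is_path (\<lambda>u v. u \<in> X \<and> v \<in> X \<and> q \<le> w u * K u v) ps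
                   \<and> hd ps = x \<and> last ps \<in> A \<and> last ps \<in> X \<and> length ps \<le> L + 1"
    and wm: "\<And>x. x \<in> X \<Longrightarrow> x \<notin> A \<Longrightarrow> w x \<le> Wm"
    and fA: "\<And>x. x \<in> X \<Longrightarrow> x \<in> A \<Longrightarrow> f x = 0"
    and Wm0: "Wm \<ge> 0"
  shows "q / (2 * real (card X) * Wm * (real L)\<^sup>2) * nrm X w f \<le> Dir X w K f"
proof -
  define E where "E = Dir X w K f"
  have E0: "E \<ge> 0" unfolding E_def by (rule Dir_nonneg[OF w0 K0])
  define s where "s = sqrt (2 * E / q)"
  have edge: "\<bar>f u - f v\<bar> \<le> s" if "u \<in> X \<and> v \<in> X \<and> q \<le> w u * K u v" for u v
  proof -
    have "q * (f u - f v)\<^sup>2 \<le> w u * K u v * (f u - f v)\<^sup>2"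
      using that by (intro mult_right_mono) auto
    also have "\<dots> \<le> 2 * E" unfolding E_def using that by (intro Dir_term[OF fin w0 K0]) auto
    finally have "(f u - f v)\<^sup>2 \<le> 2 * E / q" using q by (simp add: field_simps)
    then have "sqrt ((f u - f v)\<^sup>2) \<le> s" unfolding s_def by (rule real_sqrt_le_mono)
    then show ?thesis by simp
  qed
  have s0: "s \<ge> 0" unfolding s_def using E0 q by simp
  have pt: "w x * (f x)\<^sup>2 \<le> Wm * ((real L)\<^sup>2 * (2 * E / q))" if x: "x \<in> X" for x
  proof (cases "x \<in> A")
    case True
    have "0 \<le> Wm * ((real L)\<^sup>2 * (2 * E / q))" using Wm0 E0 q by (intro mult_nonneg_nonneg) auto
    then show ?thesis using fA[OF x True] by simp
  next
    case False
    obtain ps where ps: "is_path (\<lambda>u v. u \<in> X \<and> v \<in> X \<and> q \<le> w u * K u v) ps" "hd ps = x"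
      "last ps \<in> A" "last ps \<in> X" "length ps \<le> L + 1"
      using paths[OF x False] by blast
    have "\<bar>f x\<bar> \<le> real (length ps - 1) * s"
      using path_bound[OF ps(1), of f s] edge fA[OF ps(4) ps(3)] ps(2) by blast
    also have "\<dots> \<le> real L * s" using ps(5) s0 by (intro mult_right_mono) auto
    finally have "\<bar>f x\<bar> \<le> real L * s" .
    then have "\<bar>f x\<bar>\<^sup>2 \<le> (real L * s)\<^sup>2" by (intro power_mono) auto
    also have "\<dots> = (real L)\<^sup>2 * (2 * E / q)" unfolding s_def using E0 q
      by (simp add: power_mult_distrib)
    finally have fx: "(f x)\<^sup>2 \<le> (real L)\<^sup>2 * (2 * E / q)" by simp
    have "w x * (f x)\<^sup>2 \<le> w x * ((real L)\<^sup>2 * (2 * E / q))"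
      using fx w0[OF x] by (intro mult_left_mono) auto
    also have "\<dots> \<le> Wm * ((real L)\<^sup>2 * (2 * E / q))"
      using wm[OF x False] E0 q by (intro mult_right_mono) auto
    finally show ?thesis .
  qed
  have "nrm X w f \<le> (\<Sum>x\<in>X. Wm * ((real L)\<^sup>2 * (2 * E / q)))"
    unfolding nrm_def by (intro sum_mono pt)
  also have "\<dots> = real (card X) * Wm * (real L)\<^sup>2 * 2 * E / q" by simp
  finally have nb0: "nrm X w f \<le> real (card X) * Wm * (real L)\<^sup>2 * 2 * E / q" .
  define C where "C = real (card X) * Wm * (real L)\<^sup>2"
  have C0: "C \<ge> 0" unfolding C_def using Wm0 by simp
  have nb: "nrm X w f \<le> C * 2 * E / q" using nb0 unfolding C_def .
  have "q / (2 * C) * nrm X w f \<le> E"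
  proof (cases "C = 0")
    case True
    then show ?thesis using E0 by simp
  next
    case False
    then have pos: "C > 0" using C0 by linarith
    have "q / (2 * C) * nrm X w f \<le> q / (2 * C) * (C * 2 * E / q)"
      using nb pos q by (intro mult_left_mono) auto
    also have "q / (2 * C) * (C * 2 * E / q) = E * ((q * C) / (q * C))" by (simp add: algebra_simps)
    also have "(q * C) / (q * C) = 1" using pos q by simp
    finally show ?thesis by simp
  qed
  then show ?thesis unfolding C_def E_def by (simp add: mult.assoc)
qed

lemma one_step:
  assumes fin: "finite X"
    and wpos: "\<And>x. x \<in> X \<Longrightarrow> w x > 0"
    and w'pos: "\<And>x. x \<in> X \<Longrightarrow> w' x > 0"
    and Kpos: "\<And>x y. x \<in> X \<Longrightarrow> y \<in> X \<Longrightarrow> K x y \<ge> 0"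
    and st: "\<And>y. y \<in> X \<Longrightarrow> (\<Sum>x\<in>X. K y x) = 1"
    and db: "\<And>x y. x \<in> X \<Longrightarrow> y \<in> X \<Longrightarrow> w x * K x y = w y * K y x"
    and poinc: "\<And>f. (\<And>x. x \<in> X \<Longrightarrow> x \<in> A \<Longrightarrow> f x = 0) \<Longrightarrow> \<delta> * nrm X w f \<le> Dir X w K f"
    and d0: "0 \<le> \<delta>" and d1: "\<delta> \<le> 1/2"
    and r0: "r \<ge> 0"
    and ratio: "\<And>y. y \<in> X \<Longrightarrow> w y \<le> r * w' y"
    and vA: "\<And>x. x \<in> X \<Longrightarrow> x \<in> A \<Longrightarrow> v x = 0"
    and v': "\<And>y. y \<in> X \<Longrightarrow> v' y = (if y \<in> A then 0 else (\<Sum>x\<in>X. v x * K x y))"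
  shows "(\<Sum>y\<in>X. (v' y)\<^sup>2 / w' y) \<le> r * (1 - \<delta>)\<^sup>2 * (\<Sum>x\<in>X. (v x)\<^sup>2 / w x)"
proof -
  define \<phi> where "\<phi> = (\<lambda>x. v x / w x)"
  have vphi: "v x = \<phi> x * w x" if "x \<in> X" for x
    using wpos[OF that] unfolding \<phi>_def by simp
  have key: "v' y = w y * Pop X A K \<phi> y" if y: "y \<in> X" for y
  proof (cases "y \<in> A")
    case True then show ?thesis using v'[OF y] unfolding Pop_def by simp
  next
    case False
    have "(\<Sum>x\<in>X. v x * K x y) = (\<Sum>x\<in>X. w y * (K y x * (if x \<in> A then 0 else \<phi> x)))"
    proof (intro sum.cong refl)
      fix x assume x: "x \<in> X"
      show "v x * K x y = w y * (K y x * (if x \<in> A then 0 else \<phi> x))"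
      proof (cases "x \<in> A")
        case True then show ?thesis using vA[OF x] by simp
      next
        case False
        have "v x * K x y = \<phi> x * (w x * K x y)" using vphi[OF x] by simp
        also have "\<dots> = \<phi> x * (w y * K y x)" using db[OF x y] by simp
        finally show ?thesis using False by simp
      qed
    qed
    then show ?thesis using v'[OF y] False unfolding Pop_def by (simp add: sum_distrib_left)
  qed
  have "(\<Sum>y\<in>X. (v' y)\<^sup>2 / w' y) \<le> (\<Sum>y\<in>X. r * (w y * (Pop X A K \<phi> y)\<^sup>2))"
  proof (intro sum_mono)
    fix y assume y: "y \<in> X"
    have "(v' y)\<^sup>2 / w' y = (w y / w' y) * (w y * (Pop X A K \<phi> y)\<^sup>2)"
      using key[OF y] by (simp add: power2_eq_square)
    also have "\<dots> \<le> r * (w y * (Pop X A K \<phi> y)\<^sup>2)"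
    proof (rule mult_right_mono)
      show "w y / w' y \<le> r" using ratio[OF y] w'pos[OF y] by (simp add: divide_le_eq)
      show "0 \<le> w y * (Pop X A K \<phi> y)\<^sup>2" using wpos[OF y] by simp
    qed
    finally show "(v' y)\<^sup>2 / w' y \<le> r * (w y * (Pop X A K \<phi> y)\<^sup>2)" .
  qed
  also have "\<dots> = r * nrm X w (Pop X A K \<phi>)" unfolding nrm_def by (simp add: sum_distrib_left)
  also have "\<dots> \<le> r * ((1 - \<delta>)\<^sup>2 * nrm X w \<phi>)"
  proof (rule mult_left_mono)
    show "nrm X w (Pop X A K \<phi>) \<le> (1 - \<delta>)\<^sup>2 * nrm X w \<phi>"
      by (rule contraction[OF fin wpos Kpos st db poinc d0 d1])
    show "0 \<le> r" by (rule r0)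
  qed
  also have "nrm X w \<phi> = (\<Sum>x\<in>X. (v x)\<^sup>2 / w x)"
    unfolding nrm_def \<phi>_def by (intro sum.cong refl) (simp add: power2_eq_square)
  finally show ?thesis by (simp add: mult.assoc)
qed

definition flip :: "bool list \<Rightarrow> nat \<Rightarrow> bool list" where
  "flip x i = x[i := \<not> x ! i]"

lemma HW_card: "HW s = card {i. i < length s \<and> s ! i}"
  unfolding HW_def by (simp add: length_filter_conv_card)

lemma length_flip[simp]: "length (flip x i) = length x"
  by (simp add: flip_def)

lemma HD_flip: assumes "i < length x" shows "HD x (flip x i) = 1"
proof -
  have "{j. j < length x \<and> x ! j \<noteq> flip x i ! j} = {i}"
    using assms by (auto simp: flip_def nth_list_update)
  then show ?thesis unfolding HD_def by simp
qed

lemma HW_flip_up: assumes "i < length x" "\<not> x ! i" shows "HW (flip x i) = HW x + 1"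
proof -
  have "{j. j < length (flip x i) \<and> flip x i ! j} = insert i {j. j < length x \<and> x ! j}"
    using assms by (auto simp: flip_def nth_list_update)
  moreover have "i \<notin> {j. j < length x \<and> x ! j}" using assms by auto
  ultimately show ?thesis unfolding HW_card by simp
qed

lemma HW_flip_down: assumes "i < length x" "x ! i" shows "HW (flip x i) + 1 = HW x"
proof -
  have e: "{j. j < length x \<and> x ! j} = insert i {j. j < length (flip x i) \<and> flip x i ! j}"
    using assms by (auto simp: flip_def nth_list_update)
  moreover have "i \<notin> {j. j < length (flip x i) \<and> flip x i ! j}" using assms by (auto simp: flip_def)
  ultimately show ?thesis unfolding HW_card by simp
qed

lemma HD_sym: "length x = length y \<Longrightarrow> HD x y = HD y x"
  unfolding HD_def by (metis)

lemma HD_le: "HD x y \<le> length x"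
proof -
  have "{i. i < length x \<and> x ! i \<noteq> y ! i} \<subseteq> {..<length x}" by auto
  then show ?thesis unfolding HD_def using card_mono[of "{..<length x}"] by fastforce
qed

lemma HD_0: assumes "length x = length y" "HD x y = 0" shows "x = y"
proof -
  have "{i. i < length x \<and> x ! i \<noteq> y ! i} = {}"
    using assms(2) unfolding HD_def by (simp add: card_eq_0_iff)
  then show ?thesis using assms(1) by (auto intro: nth_equalityI)
qed

lemma HD_self[simp]: "HD x x = 0" unfolding HD_def by simp

lemma HD_1: assumes "length x = length y" "HD x y = 1" shows "\<exists>i < length x. y = flip x i"
proof -
  obtain i where i: "{j. j < length x \<and> x ! j \<noteq> y ! j} = {i}"
    using assms(2) unfolding HD_def by (auto simp: card_Suc_eq)
  then have il: "i < length x" and ne: "x ! i \<noteq> y ! i" by auto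
  have "y = flip x i"
  proof (rule nth_equalityI)
    show "length y = length (flip x i)" using assms by simp
    fix j assume "j < length y"
    then show "y ! j = flip x i ! j"
      using i ne assms(1) by (cases "j = i") (auto simp: flip_def nth_list_update)
  qed
  then show ?thesis using il by blast
qed

lemma HD_flip_other:
  assumes "i < length x" "length g = length x" "x ! i \<noteq> g ! i"
  shows "HD (flip x i) g + 1 = HD x g"
proof -
  have e: "{j. j < length x \<and> x ! j \<noteq> g ! j} = insert i {j. j < length (flip x i) \<and> flip x i ! j \<noteq> g ! j}"
    using assms by (auto simp: flip_def nth_list_update)
  moreover have "i \<notin> {j. j < length (flip x i) \<and> flip x i ! j \<noteq> g ! j}" using assms by (auto simp: flip_def)
  ultimately show ?thesis unfolding HD_def by simp
qed

lemma finite_search_space: "finite (search_space N nl nu)"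
proof -
  have "search_space N nl nu \<subseteq> {xs. set xs \<subseteq> UNIV \<and> length xs = N}"
    unfolding search_space_def by auto
  moreover have "finite {xs :: bool list. set xs \<subseteq> UNIV \<and> length xs = N}"
    by (rule finite_lists_length_eq) simp
  ultimately show ?thesis by (rule finite_subset)
qed

lemma nbhd_sub: "nbhd N nl nu x \<subseteq> search_space N nl nu"
  unfolding nbhd_def by auto

lemma finite_nbhd: "finite (nbhd N nl nu x)"
  using finite_subset[OF nbhd_sub finite_search_space] .

lemma not_in_nbhd: "x \<notin> nbhd N nl nu x"
  unfolding nbhd_def by simp

lemma nbhd_sym:
  assumes "x \<in> search_space N nl nu" "y \<in> search_space N nl nu"
  shows "y \<in> nbhd N nl nu x \<longleftrightarrow> x \<in> nbhd N nl nu y"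
proof -
  have "length x = length y" using assms unfolding search_space_def by simp
  then have "HD x y = HD y x" by (rule HD_sym)
  then show ?thesis using assms unfolding nbhd_def by simp
qed

lemma nbhd_card:
  assumes "x \<in> search_space N nl nu"
  shows "card (nbhd N nl nu x) \<le> N"
proof -
  have "nbhd N nl nu x \<subseteq> flip x ` {..<N}"
  proof
    fix y assume yn: "y \<in> nbhd N nl nu x"
    have y: "y \<in> search_space N nl nu" "HD x y = 1" using yn unfolding nbhd_def by auto
    have l: "length x = length y" "length x = N" using y(1) assms unfolding search_space_def by auto
    obtain i where i: "i < length x" "y = flip x i" using HD_1[OF l(1) y(2)] by blast
    have "i \<in> {..<N}" using i(1) l(2) by simp
    then show "y \<in> flip x ` {..<N}" using i(2) by (rule rev_image_eqI)
  qed
  then have "card (nbhd N nl nu x) \<le> card (flip x ` {..<N})" by (rule card_mono[rotated]) simp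
  also have "\<dots> \<le> N" using card_image_le[of "{..<N}" "flip x"] by simp
  finally show ?thesis .
qed

lemma flip_in_ss:
  assumes x: "x \<in> search_space N nl nu" and i: "i < N"
    and c: "(\<not> x ! i \<and> HW x < nu) \<or> (x ! i \<and> nl < HW x)"
  shows "flip x i \<in> search_space N nl nu"
proof -
  have l: "length x = N" using x unfolding search_space_def by simp
  show ?thesis
  proof (cases "x ! i")
    case True
    then have "HW (flip x i) + 1 = HW x" using HW_flip_down[of i x] i l by simp
    then show ?thesis using c True x l unfolding search_space_def by auto
  next
    case False
    then have "HW (flip x i) = HW x + 1" using HW_flip_up[of i x] i l by simp
    then show ?thesis using c False x l unfolding search_space_def by auto
  qed
qed

lemma flip_in_nbhd:
  assumes x: "x \<in> search_space N nl nu" and i: "i < N"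
    and c: "(\<not> x ! i \<and> HW x < nu) \<or> (x ! i \<and> nl < HW x)"
  shows "flip x i \<in> nbhd N nl nu x"
  using flip_in_ss[OF assms] HD_flip[of i x] x i unfolding nbhd_def search_space_def by auto

lemma nbhd_nonempty:
  assumes x: "x \<in> search_space N nl nu" and "nl < nu" "nu \<le> N"
  shows "nbhd N nl nu x \<noteq> {}"
proof -
  have l: "length x = N" and h: "nl \<le> HW x" "HW x \<le> nu" using x unfolding search_space_def by auto
  show ?thesis
  proof (cases "HW x < nu")
    case True
    have "\<exists>i<N. \<not> x ! i"
    proof (rule ccontr)
      assume "\<not> ?thesis"
      then have "{i. i < length x \<and> x ! i} = {..<N}" using l by auto
      then have "HW x = N" unfolding HW_card by simp
      then show False using True assms by simp
    qed
    then obtain i where "i < N" "\<not> x ! i" by blast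
    then show ?thesis using flip_in_nbhd[OF x, of i] True by blast
  next
    case False
    then have hx: "HW x = nu" using h by simp
    have "\<exists>i<N. x ! i"
    proof (rule ccontr)
      assume "\<not> ?thesis"
      then have "{i. i < length x \<and> x ! i} = {}" using l by auto
      then have "HW x = 0" unfolding HW_card by simp
      then show False using hx assms by simp
    qed
    then obtain i where "i < N" "x ! i" by blast
    then show ?thesis using flip_in_nbhd[OF x, of i] hx assms by auto
  qed
qed

lemma step_towards:
  assumes x: "x \<in> search_space N nl nu" and g: "g \<in> search_space N nl nu" and ne: "x \<noteq> g"
    and "nl < nu"
  shows "\<exists>i<N. x ! i \<noteq> g ! i \<and> ((\<not> x ! i \<and> HW x < nu) \<or> (x ! i \<and> nl < HW x))"
proof (rule ccontr)
  assume na: "\<not> ?thesis"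
  have lx: "length x = N" and lg: "length g = N" using x g unfolding search_space_def by auto
  obtain i0 where i0: "i0 < N" "x ! i0 \<noteq> g ! i0"
    using ne lx lg nth_equalityI[of x g] by auto
  show False
  proof (cases "\<exists>i<N. \<not> x ! i \<and> g ! i")
    case True
    then obtain i where i: "i < N" "\<not> x ! i" "g ! i" by blast
    then have "\<not> HW x < nu" using na by auto
    then have "HW x = nu" using x unfolding search_space_def by auto
    then have tf: "\<forall>j<N. x ! j \<longrightarrow> g ! j" using na assms(4) by auto
    have "{j. j < length x \<and> x ! j} \<subset> {j. j < length g \<and> g ! j}"
      using tf i lx lg by auto
    then have "HW x < HW g" unfolding HW_card by (intro psubset_card_mono) auto
    then show False using \<open>HW x = nu\<close> g unfolding search_space_def by auto
  next
    case False
    then have i0': "x ! i0" "\<not> g ! i0" using i0 by auto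
    then have "\<not> nl < HW x" using na i0 by auto
    then have "HW x = nl" using x unfolding search_space_def by auto
    have ft: "\<forall>j<N. g ! j \<longrightarrow> x ! j" using False by auto
    have "{j. j < length g \<and> g ! j} \<subset> {j. j < length x \<and> x ! j}"
      using ft i0' i0 lx lg by auto
    then have "HW g < HW x" unfolding HW_card by (intro psubset_card_mono) auto
    then show False using \<open>HW x = nl\<close> g unfolding search_space_def by auto
  qed
qed

lemma is_path_mono:
  "is_path R ps \<Longrightarrow> (\<And>u v. R u v \<Longrightarrow> R' u v) \<Longrightarrow> is_path R' ps"
  by (induction R ps rule: is_path.induct) auto

lemma ss_paths:
  assumes g: "g \<in> search_space N nl nu" and "nl < nu"
  shows "x \<in> search_space N nl nu \<Longrightarrow> \<exists>ps. is_path (\<lambda>u v. u \<in> search_space N nl nu \<and> v \<in> search_space N nl nu \<and> v \<in> nbhd N nl nu u) ps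
     \<and> hd ps = x \<and> last ps = g \<and> length ps \<le> HD x g + 1"
proof (induction "HD x g" arbitrary: x)
  case 0
  then have "x = g" using HD_0[of x g] g unfolding search_space_def by auto
  then show ?case by (intro exI[of _ "[x]"]) auto
next
  case (Suc n)
  then have ne: "x \<noteq> g" by auto
  obtain i where i: "i < N" "x ! i \<noteq> g ! i" "(\<not> x ! i \<and> HW x < nu) \<or> (x ! i \<and> nl < HW x)"
    using step_towards[OF Suc.prems g ne assms(2)] by blast
  have lx: "length x = N" "length g = N" using Suc.prems g unfolding search_space_def by auto
  have fx: "flip x i \<in> nbhd N nl nu x" by (rule flip_in_nbhd[OF Suc.prems i(1) i(3)])
  have fs: "flip x i \<in> search_space N nl nu" using fx nbhd_sub by blast
  have "HD (flip x i) g + 1 = HD x g" using HD_flip_other[of i x g] i lx by simp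
  then have hn: "n = HD (flip x i) g" using Suc.hyps(2) by simp
  obtain ps where ps: "is_path (\<lambda>u v. u \<in> search_space N nl nu \<and> v \<in> search_space N nl nu \<and> v \<in> nbhd N nl nu u) ps"
    "hd ps = flip x i" "last ps = g" "length ps \<le> HD (flip x i) g + 1"
    using Suc.hyps(1)[OF hn fs] by blast
  have "ps \<noteq> []" using ps(1) by (cases ps) auto
  then obtain r where r: "ps = flip x i # r" using ps(2) by (cases ps) auto
  show ?case
  proof (intro exI[of _ "x # ps"] conjI)
    show "is_path (\<lambda>u v. u \<in> search_space N nl nu \<and> v \<in> search_space N nl nu \<and> v \<in> nbhd N nl nu u) (x # ps)"
      using ps(1) r Suc.prems fs fx by simp
    show "last (x # ps) = g" using ps(3) \<open>ps \<noteq> []\<close> by simp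
    show "length (x # ps) \<le> HD x g + 1" using ps(4) hn Suc.hyps(2) by simp
  qed simp
qed

lemma len_filter_mono_cr:
  "length (filter (\<lambda>(x, a', y'). a' = a \<and> y' = y \<and> h s x) D) \<le> length (filter (\<lambda>(x, a', y'). a' = a \<and> y' = y) D)"
  by (induction D) auto

lemma cond_rate_bounds: "0 \<le> cond_rate h D s a y" "cond_rate h D s a y \<le> 1"
proof -
  have le: "real (length (filter (\<lambda>(x, a', y'). a' = a \<and> y' = y \<and> h s x) D)) \<le> real (length (filter (\<lambda>(x, a', y'). a' = a \<and> y' = y) D))"
    using len_filter_mono_cr by simp
  show "0 \<le> cond_rate h D s a y" unfolding cond_rate_def by simp
  show "cond_rate h D s a y \<le> 1" unfolding cond_rate_def using le
    by (cases "length (filter (\<lambda>(x, a', y'). a' = a \<and> y' = y) D) = 0") (auto simp: divide_le_eq)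
qed

lemma EOD_bounds: "0 \<le> EOD h D s" "EOD h D s \<le> 1"
proof -
  have a: "0 \<le> cond_rate h D s a y" "cond_rate h D s a y \<le> 1" for a y by (rule cond_rate_bounds(1), rule cond_rate_bounds(2))
  have b1: "\<bar>cond_rate h D s False True - cond_rate h D s True True\<bar> \<le> 1"
    using a[of False True] a[of True True] by (simp add: abs_le_iff)
  have b2: "\<bar>cond_rate h D s False False - cond_rate h D s True False\<bar> \<le> 1"
    using a[of False False] a[of True False] by (simp add: abs_le_iff)
  show "0 \<le> EOD h D s" unfolding EOD_def by simp
  show "EOD h D s \<le> 1" unfolding EOD_def using b1 b2 by simp
qed

lemma cost_bounds:
  assumes "p \<ge> 0"
  shows "0 \<le> cost N p t h D s" "cost N p t h D s \<le> 1 + p * EOD h D (s0 N)"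
proof -
  have i: "0 \<le> indicator_bool b" "indicator_bool b \<le> 1" for b unfolding indicator_bool_def by auto
  have e0: "0 \<le> p * EOD h D (s0 N)" using assms EOD_bounds(1)[of h D "s0 N"] by simp
  show "0 \<le> cost N p t h D s" unfolding cost_def using EOD_bounds[of h D s] e0 i by simp
  have "p * EOD h D (s0 N) * indicator_bool (F1 h D s < t * F1 h D (s0 N)) \<le> p * EOD h D (s0 N) * 1"
    using e0 i by (intro mult_left_mono) auto
  then show "cost N p t h D s \<le> 1 + p * EOD h D (s0 N)" unfolding cost_def using EOD_bounds[of h D s] by simp
qed

definition acc :: "('s \<Rightarrow> real) \<Rightarrow> (nat \<Rightarrow> real) \<Rightarrow> nat \<Rightarrow> 's \<Rightarrow> 's \<Rightarrow> real" where
  "acc E T m x y = (if E y - E x \<le> 0 then 1 else exp (- (E y - E x) / T m))"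

lemma acc_bounds: "T m > 0 \<Longrightarrow> 0 \<le> acc E T m x y \<and> acc E T m x y \<le> 1"
  unfolding acc_def by (auto intro: divide_nonpos_pos)

lemma pmf_step_inner:
  assumes T: "T m > 0" and yx: "y \<noteq> x"
  shows "pmf (let dE = E s' - E x in
       if dE \<le> 0 then return_pmf s'
       else map_pmf (\<lambda>b. if b then s' else x) (bernoulli_pmf (exp (- dE / T m)))) y
     = (if s' = y then acc E T m x y else 0)"
proof (cases "E s' - E x \<le> 0")
  case True then show ?thesis by (auto simp: acc_def indicator_def)
next
  case False
  have b: "0 \<le> exp (- (E s' - E x) / T m)" "exp (- (E s' - E x) / T m) \<le> 1" using False T by (auto intro: divide_nonpos_pos)
  show ?thesis
  proof (cases "s' = y")
    case True
    have "(\<lambda>b. if b then s' else x) -` {y} = {True}" using True yx by (auto split: if_splits)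
    then show ?thesis using False True b
      by (simp add: Let_def pmf_map acc_def measure_pmf_single)
  next
    case F2: False
    have "(\<lambda>b. if b then s' else x) -` {y} = {}" using F2 yx by (auto split: if_splits)
    then show ?thesis using False F2 by (simp add: Let_def pmf_map)
  qed
qed

lemma pmf_step:
  assumes fin: "finite (G x)" and ne: "G x \<noteq> {}" and T: "T m > 0" and yx: "y \<noteq> x"
  shows "pmf (sa_step E G T m x) y = (if y \<in> G x then acc E T m x y / real (card (G x)) else 0)"
proof -
  have "pmf (sa_step E G T m x) y = (\<Sum>s'\<in>G x. (if s' = y then acc E T m x y else 0)) / real (card (G x))"
    unfolding sa_step_def using pmf_step_inner[where T=T and m=m and y=y and x=x and E=E, OF T yx]
    by (simp add: pmf_bind_pmf_of_set[OF ne fin])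
  also have "\<dots> = (if y \<in> G x then acc E T m x y / real (card (G x)) else 0)"
    using fin by (simp add: sum.delta')
  finally show ?thesis .
qed

lemma set_pmf_step:
  assumes fin: "finite (G x)" and ne: "G x \<noteq> {}"
  shows "set_pmf (sa_step E G T m x) \<subseteq> insert x (G x)"
  unfolding sa_step_def using fin ne
  by (auto simp: Let_def split: if_splits)

definition Zd :: "('s \<Rightarrow> real) \<Rightarrow> ('s \<Rightarrow> 's set) \<Rightarrow> (nat \<Rightarrow> real) \<Rightarrow> 's \<Rightarrow> 's set \<Rightarrow> nat \<Rightarrow> 's option pmf" where
  "Zd E G T init A k = map_pmf (\<lambda>xs. if (\<forall>s\<in>set xs. s \<notin> A) then Some (last xs) else None) (sa_run E G T init k)"

lemma Zd_Suc:
  "Zd E G T init A (Suc k) = bind_pmf (Zd E G T init A k)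
     (\<lambda>opt. case opt of None \<Rightarrow> return_pmf None | Some x \<Rightarrow> map_pmf (\<lambda>s'. if s' \<in> A then None else Some s') (sa_step E G T k x))"
  unfolding Zd_def sa_run.simps map_bind_pmf bind_map_pmf map_pmf_comp
proof (rule bind_pmf_cong[OF refl])
  fix xs
  show "map_pmf (\<lambda>x. if \<forall>s\<in>set (xs @ [x]). s \<notin> A then Some (last (xs @ [x])) else None) (sa_step E G T k (last xs)) =
    (case if \<forall>s\<in>set xs. s \<notin> A then Some (last xs) else None of None \<Rightarrow> return_pmf None
     | Some x \<Rightarrow> map_pmf (\<lambda>s'. if s' \<in> A then None else Some s') (sa_step E G T k x))"
  proof (cases "\<forall>s\<in>set xs. s \<notin> A")
    case True
    then show ?thesis by (auto intro!: map_pmf_cong)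
  next
    case False
    have eq: "map_pmf (\<lambda>x. if \<forall>s\<in>set (xs @ [x]). s \<notin> A then Some (last (xs @ [x])) else None) (sa_step E G T k (last xs))
       = map_pmf (\<lambda>x. None) (sa_step E G T k (last xs))"
      using False by (intro map_pmf_cong) auto
    have c: "(if \<forall>s\<in>set xs. s \<notin> A then Some (last xs) else None) = None" using False by simp
    show ?thesis unfolding c eq by (simp only: option.simps map_pmf_const)
  qed
qed

lemma sa_run_support:
  assumes init: "init \<in> X" and cl: "\<And>m x. x \<in> X \<Longrightarrow> set_pmf (sa_step E G T m x) \<subseteq> X"
  shows "xs \<in> set_pmf (sa_run E G T init k) \<Longrightarrow> xs \<noteq> [] \<and> last xs \<in> X"
proof (induction k arbitrary: xs)
  case 0 then show ?case using init by simp
next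
  case (Suc k)
  then obtain ys s' where "ys \<in> set_pmf (sa_run E G T init k)" "s' \<in> set_pmf (sa_step E G T k (last ys))" "xs = ys @ [s']"
    by auto
  then show ?case using Suc.IH cl by auto
qed

lemma Zd_support:
  assumes init: "init \<in> X" and cl: "\<And>m x. x \<in> X \<Longrightarrow> set_pmf (sa_step E G T m x) \<subseteq> X"
  shows "set_pmf (Zd E G T init A k) \<subseteq> insert None (Some ` X)"
  unfolding Zd_def using sa_run_support[OF init cl] by auto

lemma Zd_0: "pmf (Zd E G T init A 0) (Some y) = (if y = init \<and> init \<notin> A then 1 else 0)"
  unfolding Zd_def by (auto simp: indicator_def)

lemma Zd_Suc_pmf:
  assumes fin: "finite X" and init: "init \<in> X" and cl: "\<And>m x. x \<in> X \<Longrightarrow> set_pmf (sa_step E G T m x) \<subseteq> X"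
  shows "pmf (Zd E G T init A (Suc k)) (Some y) =
    (if y \<in> A then 0 else (\<Sum>x\<in>X. pmf (Zd E G T init A k) (Some x) * pmf (sa_step E G T k x) y))"
proof -
  define g where "g = (\<lambda>opt. case opt of None \<Rightarrow> return_pmf None | Some x \<Rightarrow> map_pmf (\<lambda>s'. if s' \<in> A then None else Some s') (sa_step E G T k x))"
  have gS: "pmf (g (Some x)) (Some y) = (if y \<in> A then 0 else pmf (sa_step E G T k x) y)" for x
  proof -
    have "(\<lambda>s'. if s' \<in> A then None else Some s') -` {Some y} = (if y \<in> A then {} else {y})" by (auto split: if_splits)
    then show ?thesis unfolding g_def by (simp add: pmf_map measure_pmf_single)
  qed
  have "pmf (Zd E G T init A (Suc k)) (Some y) = (\<integral>opt. pmf (g opt) (Some y) \<partial>measure_pmf (Zd E G T init A k))"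
    unfolding Zd_Suc g_def[symmetric] pmf_bind ..
  also have "\<dots> = (\<Sum>a\<in>Some ` X. pmf (g a) (Some y) * pmf (Zd E G T init A k) a)"
  proof (rule integral_measure_pmf_real)
    show "finite (Some ` X)" using fin by simp
    fix a assume a: "a \<in> set_pmf (Zd E G T init A k)" "pmf (g a) (Some y) \<noteq> 0"
    then have "a \<noteq> None" unfolding g_def by (cases a) auto
    then show "a \<in> Some ` X" using a Zd_support[OF init cl, of A k] by auto
  qed
  also have "\<dots> = (\<Sum>x\<in>X. pmf (g (Some x)) (Some y) * pmf (Zd E G T init A k) (Some x))"
    by (subst sum.reindex) (auto simp: inj_on_def)
  also have "\<dots> = (if y \<in> A then 0 else (\<Sum>x\<in>X. pmf (Zd E G T init A k) (Some x) * pmf (sa_step E G T k x) y))"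
    unfolding gS by (auto simp: mult.commute)
  finally show ?thesis .
qed

lemma fail_prob:
  assumes fin: "finite X" and init: "init \<in> X" and cl: "\<And>m x. x \<in> X \<Longrightarrow> set_pmf (sa_step E G T m x) \<subseteq> X"
  shows "measure_pmf.prob (sa_run E G T init k) {xs. \<not> (\<exists>s\<in>set xs. s \<in> A)} = (\<Sum>x\<in>X. pmf (Zd E G T init A k) (Some x))"
proof -
  let ?Z = "Zd E G T init A k"
  have "{xs. \<not> (\<exists>s\<in>set xs. s \<in> A)} = (\<lambda>xs. if (\<forall>s\<in>set xs. s \<notin> A) then Some (last xs) else None) -` range Some"
    by (auto split: if_splits)
  then have "measure_pmf.prob (sa_run E G T init k) {xs. \<not> (\<exists>s\<in>set xs. s \<in> A)} = measure_pmf.prob ?Z (range Some)"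
    unfolding Zd_def by simp
  also have "\<dots> = measure_pmf.prob ?Z (range Some \<inter> set_pmf ?Z)" by (simp add: measure_Int_set_pmf)
  also have "range Some \<inter> set_pmf ?Z = Some ` X \<inter> set_pmf ?Z" using Zd_support[OF init cl, of A k] by auto
  also have "measure_pmf.prob ?Z (Some ` X \<inter> set_pmf ?Z) = measure_pmf.prob ?Z (Some ` X)" by (simp add: measure_Int_set_pmf)
  also have "\<dots> = (\<Sum>a\<in>Some ` X. pmf ?Z a)" using fin by (simp add: measure_measure_pmf_finite)
  also have "\<dots> = (\<Sum>x\<in>X. pmf ?Z (Some x))" by (subst sum.reindex) (auto simp: inj_on_def)
  finally show ?thesis .
qed

locale SA =
  fixes N nl nu :: nat and h :: "bool list \<Rightarrow> 'x \<Rightarrow> bool" and D :: "('x \<times> bool \<times> bool) list"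
    and t p T0 :: real
  assumes nlnu: "nl < nu" and nuN: "nu \<le> N" and p1: "p > 1"
    and T0ge: "T0 \<ge> (1 + p * EOD h D (s0 N)) * real (nu - nl)"
begin

abbreviation "X \<equiv> search_space N nl nu"
abbreviation "c \<equiv> cost N p t h D"
abbreviation "G \<equiv> nbhd N nl nu"
abbreviation "TT \<equiv> (\<lambda>m::nat. T0 / ln (2 + real m))"
abbreviation "Amin \<equiv> {s. is_global_min c X s}"

definition H :: real where "H = 1 + p * EOD h D (s0 N)"
definition K :: "nat \<Rightarrow> bool list \<Rightarrow> bool list \<Rightarrow> real" where
  "K m x y = pmf (sa_step c G TT m x) y"
definition w :: "nat \<Rightarrow> bool list \<Rightarrow> real" where
  "w m x = real (card (G x)) * exp (- c x / TT m)"

lemma H_ge1: "H \<ge> 1"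
  unfolding H_def using p1 EOD_bounds(1)[of h D "s0 N"] by simp

lemma H_le_T0: "H \<le> T0"
proof -
  have "real (nu - nl) \<ge> 1" using nlnu by simp
  then have "H * 1 \<le> H * real (nu - nl)" using H_ge1 by (intro mult_left_mono) auto
  then show ?thesis using T0ge unfolding H_def by simp
qed

lemma T0_pos: "T0 > 0" using H_le_T0 H_ge1 by simp

lemma c_bounds: "0 \<le> c x" "c x \<le> H"
  using cost_bounds[of p N t h D x] p1 unfolding H_def by auto

lemma TT_pos: "TT m > 0"
  using T0_pos by (simp add: ln_gt_zero)

lemma div_TT: "z / TT m = z * ln (2 + real m) / T0"
  using T0_pos by (simp add: field_simps)

lemma exp_TT: "exp (- z / TT m) = (2 + real m) powr (- z / T0)"
  unfolding powr_def using div_TT[of "-z" m] by (simp add: field_simps)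

lemma G_fin: "finite (G x)" by (rule finite_nbhd)
lemma G_sub: "G x \<subseteq> X" by (rule nbhd_sub)
lemma G_ne: "x \<in> X \<Longrightarrow> G x \<noteq> {}" using nbhd_nonempty nlnu nuN by blast
lemma G_card: "x \<in> X \<Longrightarrow> card (G x) \<le> N" by (rule nbhd_card)
lemma G_card1: "x \<in> X \<Longrightarrow> card (G x) \<ge> 1"
  using G_ne G_fin by (simp add: Suc_le_eq card_gt_0_iff)

lemma step_closed: assumes x: "x \<in> X" shows "set_pmf (sa_step c G TT m x) \<subseteq> X"
  using set_pmf_step[where G=G and x=x and E=c and T=TT and m=m, OF G_fin G_ne[OF x]] G_sub x by auto

lemma K_nonneg: "K m x y \<ge> 0" unfolding K_def by simp

lemma K_stoch: "x \<in> X \<Longrightarrow> (\<Sum>y\<in>X. K m x y) = 1"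
  unfolding K_def by (rule sum_pmf_eq_1[OF finite_search_space step_closed])

lemma w_pos: "x \<in> X \<Longrightarrow> w m x > 0"
  unfolding w_def using G_card1[of x] by simp

lemma aux_div: "- a / (T::real) + - (b - a) / T = - b / T"
  by (simp add: diff_divide_distrib)

lemma edge_weight:
  assumes x: "x \<in> X" and y: "y \<in> X" and xy: "x \<noteq> y"
  shows "w m x * K m x y = (if y \<in> G x then exp (- max (c x) (c y) / TT m) else 0)"
proof -
  have cpos: "real (card (G x)) > 0" using G_card1[OF x] by simp
  have K: "K m x y = (if y \<in> G x then acc c TT m x y / real (card (G x)) else 0)"
    unfolding K_def using pmf_step[where G=G and x=x and T=TT and m=m and y=y and E=c, OF G_fin G_ne[OF x] TT_pos xy[symmetric]] by simp
  show ?thesis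
  proof (cases "y \<in> G x")
    case False then show ?thesis using K by simp
  next
    case True
    have "w m x * K m x y = exp (- c x / TT m) * acc c TT m x y"
      using K True cpos unfolding w_def by simp
    also have "\<dots> = exp (- max (c x) (c y) / TT m)"
    proof (cases "c y - c x \<le> 0")
      case True then show ?thesis unfolding acc_def by (simp add: max_def)
    next
      case False
      have "exp (- c x / TT m) * exp (- (c y - c x) / TT m) = exp (- c x / TT m + - (c y - c x) / TT m)"
        by (rule exp_add[symmetric])
      also have "- c x / TT m + - (c y - c x) / TT m = - c y / TT m" by (rule aux_div)
      finally show ?thesis using False unfolding acc_def by (simp add: max_def)
    qed
    finally show ?thesis using True by simp
  qed
qed

lemma DB: "x \<in> X \<Longrightarrow> y \<in> X \<Longrightarrow> w m x * K m x y = w m y * K m y x"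
  by (cases "x = y") (simp_all add: edge_weight nbhd_sym max.commute)

lemma ratio: "x \<in> X \<Longrightarrow> w m x \<le> ((3 + real m) / (2 + real m)) * w (Suc m) x"
proof -
  assume x: "x \<in> X"
  have l: "ln (3 + real m) - ln (2 + real m) \<ge> 0" by simp
  have cT: "c x / T0 \<le> 1" "c x / T0 \<ge> 0" using c_bounds[of x] H_le_T0 T0_pos by (auto simp: divide_le_eq)
  have e: "exp (- c x / TT m) = exp (- c x / TT (Suc m)) * exp (c x / T0 * (ln (3 + real m) - ln (2 + real m)))"
    unfolding exp_add[symmetric] div_TT by (simp add: diff_divide_distrib right_diff_distrib add_ac)
  have "exp (c x / T0 * (ln (3 + real m) - ln (2 + real m))) \<le> exp (1 * (ln (3 + real m) - ln (2 + real m)))"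
    using cT l by (intro exp_mono mult_right_mono) auto
  also have "\<dots> = (3 + real m) / (2 + real m)" by (simp add: exp_diff)
  finally have r: "exp (c x / T0 * (ln (3 + real m) - ln (2 + real m))) \<le> (3 + real m) / (2 + real m)" .
  have "w m x = real (card (G x)) * exp (- c x / TT (Suc m)) * exp (c x / T0 * (ln (3 + real m) - ln (2 + real m)))"
    unfolding w_def e by simp
  also have "\<dots> \<le> real (card (G x)) * exp (- c x / TT (Suc m)) * ((3 + real m) / (2 + real m))"
    by (intro mult_left_mono r) simp
  finally show ?thesis unfolding w_def by (simp add: mult.commute)
qed

end

context SA
begin

definition kap :: real where
  "kap = (if X - Amin = {} then H else Min (c ` (X - Amin)))"

lemma Amin_ex: assumes "x \<in> X" shows "\<exists>g. g \<in> Amin"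
proof -
  have ne: "c ` X \<noteq> {}" using assms by auto
  have fin: "finite (c ` X)" using finite_search_space by simp
  obtain g where g: "g \<in> X" "c g = Min (c ` X)" using Min_in[OF fin ne] by auto
  have "\<forall>s'\<in>X. c g \<le> c s'" using g(2) Min_le[OF fin] by auto
  then show ?thesis using g(1) unfolding is_global_min_def by auto
qed

lemma kap_le: assumes "x \<in> X" "x \<notin> Amin" shows "kap \<le> c x"
proof -
  have "X - Amin \<noteq> {}" using assms by auto
  then show ?thesis unfolding kap_def using assms finite_search_space by (auto intro!: Min_le)
qed

lemma kap_pos: "kap > 0"
proof (cases "X - Amin = {}")
  case True then show ?thesis unfolding kap_def using H_ge1 by simp
next
  case False
  have fin: "finite (c ` (X - Amin))" using finite_search_space by simp
  obtain x where x: "x \<in> X - Amin" "c x = Min (c ` (X - Amin))" using Min_in[OF fin] False by fastforce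
  then have "\<not> is_global_min c X x" by simp
  then obtain y where "y \<in> X" "c y < c x" using x(1) unfolding is_global_min_def by (auto simp: not_le)
  then have "c x > 0" using c_bounds(1)[of y] by simp
  then show ?thesis unfolding kap_def using False x(2) by simp
qed

lemma kap_leH: "kap \<le> H"
proof (cases "X - Amin = {}")
  case True then show ?thesis unfolding kap_def by simp
next
  case False
  then obtain x where "x \<in> X" "x \<notin> Amin" by auto
  then show ?thesis using kap_le c_bounds(2)[of x] by fastforce
qed

definition a :: real where "a = (H - kap) / T0"
lemma a_nonneg: "a \<ge> 0" unfolding a_def using kap_leH T0_pos by simp
lemma a_lt1: "a < 1" unfolding a_def using kap_pos H_le_T0 T0_pos by (simp add: divide_less_eq)

definition beta :: real where "beta = 1 / (2 * real (card X) * real N ^ 3)"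
definition del :: "nat \<Rightarrow> real" where "del m = min (1/2) (beta * (2 + real m) powr (- a))"

lemma beta_nonneg: "beta \<ge> 0" unfolding beta_def by simp
lemma del_bounds: "0 \<le> del m" "del m \<le> 1/2"
  unfolding del_def using beta_nonneg by auto

lemma poinc:
  assumes fA: "\<And>x. x \<in> X \<Longrightarrow> x \<in> Amin \<Longrightarrow> f x = 0"
  shows "del m * nrm X (w m) f \<le> Dir X (w m) (K m) f"
proof -
  define q where "q = exp (- H / TT m)"
  define Wm where "Wm = real N * exp (- kap / TT m)"
  have q0: "q > 0" unfolding q_def by simp
  have Wm0: "Wm \<ge> 0" unfolding Wm_def by simp
  have w0: "\<And>x. x \<in> X \<Longrightarrow> w m x \<ge> 0" using w_pos less_imp_le by blast
  have K0: "\<And>x y. x \<in> X \<Longrightarrow> y \<in> X \<Longrightarrow> K m x y \<ge> 0" using K_nonneg by blast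
  have edge: "q \<le> w m u * K m u v" if "u \<in> X" "v \<in> X" "v \<in> G u" for u v
  proof -
    have "u \<noteq> v" using that(3) not_in_nbhd by blast
    then have "w m u * K m u v = exp (- max (c u) (c v) / TT m)" using edge_weight that by simp
    moreover have "- H / TT m \<le> - max (c u) (c v) / TT m"
      using c_bounds(2)[of u] c_bounds(2)[of v] TT_pos[of m] by (intro divide_right_mono) auto
    ultimately show ?thesis unfolding q_def by simp
  qed
  have paths: "\<exists>ps. is_path (\<lambda>u v. u \<in> X \<and> v \<in> X \<and> q \<le> w m u * K m u v) ps
                   \<and> hd ps = x \<and> last ps \<in> Amin \<and> last ps \<in> X \<and> length ps \<le> N + 1"
    if x: "x \<in> X" "x \<notin> Amin" for x
  proof -
    obtain g where g: "g \<in> Amin" using Amin_ex[OF x(1)] by blast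
    then have gX: "g \<in> X" unfolding is_global_min_def by simp
    obtain ps where ps: "is_path (\<lambda>u v. u \<in> X \<and> v \<in> X \<and> v \<in> G u) ps" "hd ps = x" "last ps = g"
      "length ps \<le> HD x g + 1"
      using ss_paths[OF gX nlnu x(1)] by blast
    have "HD x g \<le> N" using HD_le[of x g] x(1) unfolding search_space_def by simp
    then have "length ps \<le> N + 1" using ps(4) by simp
    moreover have "is_path (\<lambda>u v. u \<in> X \<and> v \<in> X \<and> q \<le> w m u * K m u v) ps"
      using ps(1) by (rule is_path_mono) (use edge in blast)
    ultimately show ?thesis using ps g gX by blast
  qed
  have wm: "w m x \<le> Wm" if "x \<in> X" "x \<notin> Amin" for x
  proof -
    have "- c x / TT m \<le> - kap / TT m"
      using kap_le[OF that] TT_pos[of m] by (intro divide_right_mono) auto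
    then have "exp (- c x / TT m) \<le> exp (- kap / TT m)" by (rule exp_mono)
    moreover have "real (card (G x)) \<le> real N" using G_card[OF that(1)] by simp
    ultimately show ?thesis unfolding w_def Wm_def by (intro mult_mono) auto
  qed
  have P: "q / (2 * real (card X) * Wm * (real N)\<^sup>2) * nrm X (w m) f \<le> Dir X (w m) (K m) f"
    by (rule poincare_paths[OF finite_search_space w0 K0 q0 paths wm fA Wm0])
  have co: "q / (2 * real (card X) * Wm * (real N)\<^sup>2) = beta * (2 + real m) powr (- a)"
  proof -
    have "q / (2 * real (card X) * Wm * (real N)\<^sup>2) = (q / exp (- kap / TT m)) * beta"
      unfolding Wm_def beta_def by (simp add: power2_eq_square power3_eq_cube field_simps)
    also have "q / exp (- kap / TT m) = exp (- (H - kap) / TT m)"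
      unfolding q_def by (simp add: exp_diff[symmetric] diff_divide_distrib left_diff_distrib)
    also have "\<dots> = (2 + real m) powr (- a)" unfolding exp_TT a_def by (simp add: minus_divide_left)
    finally show ?thesis by simp
  qed
  have "del m * nrm X (w m) f \<le> (beta * (2 + real m) powr (- a)) * nrm X (w m) f"
    using nrm_nonneg[of X "w m" f] w0 unfolding del_def by (intro mult_right_mono) auto
  also have "\<dots> \<le> Dir X (w m) (K m) f" using P co by simp
  finally show ?thesis .
qed

end

context SA
begin

definition vv :: "bool list \<Rightarrow> nat \<Rightarrow> bool list \<Rightarrow> real" where
  "vv init k y = pmf (Zd c G TT init Amin k) (Some y)"

definition SS :: "bool list \<Rightarrow> nat \<Rightarrow> real" where
  "SS init k = (\<Sum>y\<in>X. (vv init k y)\<^sup>2 / w k y)"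

lemma vv_rec:
  assumes init: "init \<in> X" and y: "y \<in> X"
  shows "vv init (Suc k) y = (if y \<in> Amin then 0 else (\<Sum>x\<in>X. vv init k x * K k x y))"
  unfolding vv_def K_def by (rule Zd_Suc_pmf[OF finite_search_space init step_closed])

lemma vv_A: assumes init: "init \<in> X" and x: "x \<in> X" "x \<in> Amin" shows "vv init k x = 0"
proof (cases k)
  case 0 then show ?thesis unfolding vv_def using x by (auto simp: Zd_0)
next
  case (Suc j) then show ?thesis using vv_rec[OF init x(1)] x by simp
qed

lemma SS_step:
  assumes init: "init \<in> X"
  shows "SS init (Suc k) \<le> ((3 + real k) / (2 + real k)) * (1 - del k)\<^sup>2 * SS init k"
  unfolding SS_def
proof (rule one_step[OF finite_search_space w_pos w_pos K_nonneg K_stoch DB poinc del_bounds])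
  show "0 \<le> (3 + real k) / (2 + real k)" by simp
  show "\<And>y. y \<in> X \<Longrightarrow> w k y \<le> (3 + real k) / (2 + real k) * w (Suc k) y" by (rule ratio)
  show "\<And>x. x \<in> X \<Longrightarrow> x \<in> Amin \<Longrightarrow> vv init k x = 0" using vv_A[OF init] by blast
  show "\<And>y. y \<in> X \<Longrightarrow> vv init (Suc k) y = (if y \<in> Amin then 0 else \<Sum>x\<in>X. vv init k x * K k x y)"
    using vv_rec[OF init] by blast
qed auto

lemma SS_nonneg: "SS init k \<ge> 0"
  unfolding SS_def using w_pos by (intro sum_nonneg divide_nonneg_pos) auto

lemma SS_0: assumes init: "init \<in> X" shows "SS init 0 \<le> 2"
proof -
  have "SS init 0 = (\<Sum>y\<in>X. (if y = init \<and> init \<notin> Amin then 1 / w 0 y else 0))"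
    unfolding SS_def vv_def Zd_0 by (intro sum.cong refl) auto
  also have "\<dots> \<le> (\<Sum>y\<in>X. (if y = init then 1 / w 0 y else 0))"
    using w_pos by (intro sum_mono) (force intro: less_imp_le)
  also have "\<dots> = 1 / w 0 init" using init finite_search_space by simp
  also have "\<dots> \<le> 2"
  proof -
    have c1: "c init / T0 \<le> 1" using c_bounds(2)[of init] H_le_T0 T0_pos by (simp add: divide_le_eq)
    have "exp (- c init / TT 0) = 2 powr (- c init / T0)" using exp_TT[of "c init" 0] by simp
    also have "\<dots> \<ge> 2 powr (-1)" using c1 by (intro powr_mono) auto
    finally have e: "exp (- c init / TT 0) \<ge> 1/2" by (simp add: powr_minus)
    have "w 0 init \<ge> 1 * (1/2)" unfolding w_def using G_card1[OF init] e
      by (intro mult_mono) auto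
    then show ?thesis using w_pos[OF init] by (simp add: divide_le_eq)
  qed
  finally show ?thesis .
qed

lemma one_minus_sq: "0 \<le> d \<Longrightarrow> d \<le> 1 \<Longrightarrow> (1 - d)\<^sup>2 \<le> exp (- (d::real))"
proof -
  assume d: "0 \<le> d" "d \<le> 1"
  have "(1 - d) * (1 - d) \<le> (1 - d) * 1" using d by (intro mult_left_mono) auto
  then have "(1 - d)\<^sup>2 \<le> 1 - d" by (simp add: power2_eq_square)
  also have "1 - d \<le> exp (- d)" using exp_ge_add_one_self[of "- d"] by simp
  finally show ?thesis .
qed

lemma SS_bound: assumes init: "init \<in> X" shows "SS init k \<le> (2 + real k) * exp (- (\<Sum>j<k. del j))"
proof (induction k)
  case 0 then show ?case using SS_0[OF init] by simp
next
  case (Suc k)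
  have "SS init (Suc k) \<le> ((3 + real k) / (2 + real k)) * (1 - del k)\<^sup>2 * SS init k" by (rule SS_step[OF init])
  also have "\<dots> \<le> ((3 + real k) / (2 + real k)) * exp (- del k) * ((2 + real k) * exp (- (\<Sum>j<k. del j)))"
    using one_minus_sq[of "del k"] del_bounds[of k] Suc.IH SS_nonneg
    by (intro mult_mono mult_left_mono) auto
  also have "\<dots> = (3 + real k) * (exp (- del k) * exp (- (\<Sum>j<k. del j)))" by simp
  also have "exp (- del k) * exp (- (\<Sum>j<k. del j)) = exp (- (\<Sum>j<Suc k. del j))"
    by (simp add: exp_add[symmetric])
  finally show ?case by (simp add: add.commute)
qed

lemma exp_neg_div_le1: "0 \<le> z / T \<Longrightarrow> exp (- z / (T::real)) \<le> 1"
  by simp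

lemma fail_bound:
  assumes init: "init \<in> X"
  shows "(\<Sum>y\<in>X. vv init k y) \<le> sqrt (real (card X) * real N * SS init k)"
proof -
  have v0: "vv init k y \<ge> 0" for y unfolding vv_def by simp
  have "(\<Sum>y\<in>X. vv init k y)\<^sup>2 = (\<Sum>y\<in>X. sqrt (w k y) * (vv init k y / sqrt (w k y)))\<^sup>2"
  proof (intro arg_cong[where f="\<lambda>z. z\<^sup>2"] sum.cong refl)
    fix y assume y: "y \<in> X"
    have "sqrt (w k y) > 0" using w_pos[OF y] by simp
    then show "vv init k y = sqrt (w k y) * (vv init k y / sqrt (w k y))" by simp
  qed
  also have "\<dots> \<le> (\<Sum>y\<in>X. (sqrt (w k y))\<^sup>2) * (\<Sum>y\<in>X. (vv init k y / sqrt (w k y))\<^sup>2)"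
    by (rule Cauchy_Schwarz_ineq_sum)
  also have "(\<Sum>y\<in>X. (vv init k y / sqrt (w k y))\<^sup>2) = SS init k"
    unfolding SS_def using w_pos by (intro sum.cong refl) (simp add: power_divide less_imp_le)
  also have "(\<Sum>y\<in>X. (sqrt (w k y))\<^sup>2) \<le> (\<Sum>y\<in>X. real N)"
  proof (intro sum_mono)
    fix y assume y: "y \<in> X"
    have "0 \<le> c y / TT k" using c_bounds(1)[of y] TT_pos[of k] by (intro divide_nonneg_pos) auto
    then have "exp (- c y / TT k) \<le> 1" by (rule exp_neg_div_le1)
    then have "w k y \<le> real N * 1" unfolding w_def using G_card[OF y]
      by (intro mult_mono) auto
    moreover have "(sqrt (w k y))\<^sup>2 = w k y" using w_pos[OF y] by (simp add: less_imp_le)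
    ultimately show "(sqrt (w k y))\<^sup>2 \<le> real N" by simp
  qed
  also have "(\<Sum>y\<in>X. real N) = real (card X) * real N" by simp
  finally have sq: "(\<Sum>y\<in>X. vv init k y)\<^sup>2 \<le> real (card X) * real N * SS init k"
    using SS_nonneg by (simp add: mult_right_mono)
  have "(\<Sum>y\<in>X. vv init k y) = sqrt ((\<Sum>y\<in>X. vv init k y)\<^sup>2)"
    using v0 by (simp add: sum_nonneg)
  also have "\<dots> \<le> sqrt (real (card X) * real N * SS init k)" using sq by (rule real_sqrt_le_mono)
  finally show ?thesis .
qed

lemma del_sum: "(\<Sum>j<k. del j) \<ge> real k * (beta * (2 + real k) powr (- a))"
proof -
  have "beta * (2 + real k) powr (- a) \<le> del j" if "j < k" for j
  proof -
    have b2: "beta \<le> 1/2"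
    proof (cases "card X = 0 \<or> N = 0")
      case True then show ?thesis unfolding beta_def by auto
    next
      case False
      then have "real (card X) \<ge> 1" "real N ^ 3 \<ge> 1" by auto
      then have "2 * real (card X) * real N ^ 3 \<ge> 2 * 1 * 1" by (intro mult_mono) auto
      then show ?thesis unfolding beta_def by (simp add: divide_le_eq)
    qed
    have p1': "(2 + real k) powr (- a) \<le> 1" using a_nonneg by (simp add: powr_minus_divide ge_one_powr_ge_zero)
    have p2: "(2 + real k) powr (- a) \<le> (2 + real j) powr (- a)"
      using that a_nonneg by (intro powr_mono2') auto
    have "beta * (2 + real k) powr (- a) \<le> 1/2 * 1" using b2 p1' beta_nonneg by (intro mult_mono) auto
    moreover have "beta * (2 + real k) powr (- a) \<le> beta * (2 + real j) powr (- a)"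
      using p2 beta_nonneg by (intro mult_left_mono) auto
    ultimately show ?thesis unfolding del_def by simp
  qed
  then have "(\<Sum>j<k. beta * (2 + real k) powr (- a)) \<le> (\<Sum>j<k. del j)" by (intro sum_mono) auto
  then show ?thesis by simp
qed

lemma final_bound:
  assumes init: "init \<in> X"
  shows "measure_pmf.prob (sa_run c G TT init k) {xs. \<not> (\<exists>s\<in>set xs. s \<in> Amin)}
    \<le> sqrt (real (card X) * real N * ((2 + real k) * exp (- (beta * real k * (2 + real k) powr (- a)))))"
proof -
  have "measure_pmf.prob (sa_run c G TT init k) {xs. \<not> (\<exists>s\<in>set xs. s \<in> Amin)} = (\<Sum>y\<in>X. vv init k y)"
    unfolding vv_def by (rule fail_prob[OF finite_search_space init step_closed])
  also have "\<dots> \<le> sqrt (real (card X) * real N * SS init k)" by (rule fail_bound[OF init])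
  also have "\<dots> \<le> sqrt (real (card X) * real N * ((2 + real k) * exp (- (beta * real k * (2 + real k) powr (- a)))))"
  proof (intro real_sqrt_le_mono mult_left_mono)
    have "SS init k \<le> (2 + real k) * exp (- (\<Sum>j<k. del j))" by (rule SS_bound[OF init])
    also have "\<dots> \<le> (2 + real k) * exp (- (beta * real k * (2 + real k) powr (- a)))"
      using del_sum[of k] by (intro mult_left_mono) (auto simp: mult_ac)
    finally show "SS init k \<le> (2 + real k) * exp (- (beta * real k * (2 + real k) powr (- a)))" .
  qed simp
  finally show ?thesis .
qed

end

lemma exp_neg_le_pow:
  fixes y :: real assumes y: "y > 0" and n: "n > 0"
  shows "exp (- y) \<le> (real n / y) ^ n"
proof -
  have "(y / real n) ^ n \<le> (1 + y / real n) ^ n"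
    using y n by (intro power_mono) auto
  also have "\<dots> \<le> exp y" using y n by (intro exp_ge_one_plus_x_over_n_power_n) auto
  finally have le: "(y / real n) ^ n \<le> exp y" .
  have pos: "(y / real n) ^ n > 0" using y n by simp
  have "exp (- y) = 1 / exp y" by (simp add: exp_minus field_simps)
  also have "\<dots> \<le> 1 / (y / real n) ^ n" using le pos by (intro divide_left_mono) auto
  also have "\<dots> = (real n / y) ^ n" by (simp add: power_divide)
  finally show ?thesis .
qed

lemma analytic:
  fixes M b a cc W :: real
  assumes M0: "M \<ge> 0" and b: "b > 0" and a0: "0 \<le> a" and a1: "a < 1" and c0: "cc \<ge> 0" and W1: "W \<ge> 1"
  shows "\<exists>A>0. \<forall>k::nat. k \<ge> 1 \<longrightarrow>
    sqrt (M * ((2 + real k) * exp (- (b * real k * (2 + real k) powr (- a))))) < A / ((real k / W) powr cc)"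
proof -
  define e where "e = 1 - a"
  have e0: "e > 0" "e \<le> 1" using a0 a1 unfolding e_def by auto
  define n :: nat where "n = nat \<lceil>(1 + 2 * cc) / e\<rceil> + 1"
  have n1: "n \<ge> 1" unfolding n_def by simp
  have "real n \<ge> (1 + 2 * cc) / e" unfolding n_def by linarith
  then have en: "e * real n \<ge> 1 + 2 * cc" using e0 by (simp add: divide_le_eq mult.commute)
  define C0 where "C0 = 3 * M * (3 * real n / b) ^ n"
  have C00: "C0 \<ge> 0" unfolding C0_def using M0 b by simp
  define A where "A = sqrt C0 + 1"
  have A0: "A > 0" unfolding A_def using C00 by (simp add: add_nonneg_pos)
  show ?thesis
  proof (intro exI[of _ A] conjI allI impI A0)
    fix k :: nat assume k1: "k \<ge> 1"
    define x where "x = real k"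
    have x1: "x \<ge> 1" unfolding x_def using k1 by simp
    have xpos: "x > 0" using x1 by simp
    define y where "y = b * x * (2 + x) powr (- a)"
    have "(2 + x) powr (- a) \<ge> (3 * x) powr (- a)"
      using x1 a0 by (intro powr_mono2') auto
    moreover have "(3 * x) powr (- a) = 3 powr (- a) * x powr (- a)" using xpos by (simp add: powr_mult)
    moreover have "3 powr (- a) \<ge> 3 powr (-1)" using a1 by (intro powr_mono) auto
    moreover have "(3::real) powr (-1) = 1/3" by (simp add: powr_minus)
    ultimately have p: "(2 + x) powr (- a) \<ge> 1/3 * x powr (- a)"
    proof -
      assume h1: "(2 + x) powr (- a) \<ge> (3 * x) powr (- a)" and h2: "(3 * x) powr (- a) = 3 powr (- a) * x powr (- a)"
        and h3: "3 powr (- a) \<ge> 3 powr (-1)" and h4: "(3::real) powr (-1) = 1/3"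
      have "3 powr (- a) * x powr (- a) \<ge> 1/3 * x powr (- a)" using h3 h4 by (intro mult_right_mono) auto
      then show ?thesis using h1 h2 by linarith
    qed
    have "x * x powr (- a) = x powr e" unfolding e_def using xpos by (simp add: powr_diff powr_minus field_simps)
    then have ylow: "y \<ge> b / 3 * x powr e"
    proof -
      assume xe: "x * x powr (- a) = x powr e"
      have "b * x * (1/3 * x powr (- a)) \<le> b * x * (2 + x) powr (- a)"
        using p b xpos by (intro mult_left_mono) auto
      moreover have "b * x * (1/3 * x powr (- a)) = b / 3 * (x * x powr (- a))" by simp
      ultimately have "b / 3 * (x * x powr (- a)) \<le> b * x * (2 + x) powr (- a)" by simp
      then show ?thesis unfolding y_def xe .
    qed
    have xe0: "x powr e > 0" using xpos by simp
    have "b / 3 * x powr e > 0" using b xe0 by simp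
    then have y0: "y > 0" using ylow by linarith
    have "exp (- y) \<le> (real n / y) ^ n" by (rule exp_neg_le_pow[OF y0]) (use n1 in simp)
    also have "\<dots> \<le> (real n / (b / 3 * x powr e)) ^ n"
      using ylow y0 b xe0 n1 by (intro power_mono divide_left_mono) auto
    also have "\<dots> = (3 * real n / b) ^ n / (x powr e) ^ n"
      by (simp add: power_divide power_mult_distrib field_simps)
    also have "(x powr e) ^ n = x powr (e * real n)" using xpos by (simp add: powr_realpow[symmetric] powr_powr)
    finally have ey: "exp (- y) \<le> (3 * real n / b) ^ n / x powr (e * real n)" .
    have "M * ((2 + x) * exp (- y)) \<le> M * ((3 * x) * ((3 * real n / b) ^ n / x powr (e * real n)))"
      using M0 x1 ey by (intro mult_left_mono mult_mono) auto
    also have "\<dots> = C0 * (x / x powr (e * real n))" unfolding C0_def by (simp add: field_simps)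
    also have "x / x powr (e * real n) = x powr (1 - e * real n)" using xpos by (simp add: powr_diff)
    also have "x powr (1 - e * real n) \<le> x powr (- 2 * cc)" using x1 en by (intro powr_mono) auto
    finally have F: "M * ((2 + x) * exp (- y)) \<le> C0 * x powr (- 2 * cc)" using C00 by (simp add: mult_left_mono)
    have "sqrt (M * ((2 + x) * exp (- y))) \<le> sqrt (C0 * x powr (- 2 * cc))" using F by (rule real_sqrt_le_mono)
    also have "\<dots> = sqrt C0 * x powr (- cc)"
    proof -
      have "x powr (- 2 * cc) = (x powr (- cc))\<^sup>2" using xpos by (simp add: powr_realpow[symmetric] powr_powr mult.commute)
      then show ?thesis by (simp add: real_sqrt_mult)
    qed
    finally have S: "sqrt (M * ((2 + x) * exp (- y))) \<le> sqrt C0 * x powr (- cc)" .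
    have q0: "(x / W) powr cc > 0" using xpos W1 by simp
    have q1: "(x / W) powr cc \<le> x powr cc"
      using xpos W1 c0 by (intro powr_mono2) (auto simp: divide_le_eq)
    have "sqrt (M * ((2 + x) * exp (- y))) * (x / W) powr cc \<le> sqrt C0 * x powr (- cc) * x powr cc"
      using S q1 q0 C00 by (intro mult_mono) auto
    also have "\<dots> = sqrt C0" using xpos by (simp add: powr_minus)
    also have "\<dots> < A" unfolding A_def by simp
    finally have "sqrt (M * ((2 + x) * exp (- y))) * (x / W) powr cc < A" .
    then show "sqrt (M * ((2 + real k) * exp (- (b * real k * (2 + real k) powr (- a))))) < A / ((real k / W) powr cc)"
      using q0 unfolding x_def y_def by (simp add: pos_less_divide_eq)
  qed
qed

theorem lemma4p2:
  fixes N nl nu :: nat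
    and h :: "bool list \<Rightarrow> 'x \<Rightarrow> bool"
    and D :: "('x \<times> bool \<times> bool) list"
    and t p T0 :: real
  assumes "nl < nu" and "nu \<le> N"
    and "0 < t" and "t < 1" and "p > 1"
    and "T0 \<ge> (1 + p * EOD h D (s0 N)) * real (nu - nl)"
  shows "\<exists>A > 0. \<forall>init \<in> search_space N nl nu. \<forall>k :: nat.
           k > nat \<lceil>real (nu - nl) / 2\<rceil> \<longrightarrow>
           measure_pmf.prob
             (sa_run (cost N p t h D) (nbhd N nl nu) (\<lambda>m. T0 / ln (2 + real m)) init k)
             {xs. \<exists>s \<in> set xs. is_global_min (cost N p t h D) (search_space N nl nu) s}
           > 1 - A / ((real k / real (nu - nl)) powr
                 (min (1 / (real (nu - nl) * real N ^ nat \<lceil>real (nu - nl) / 2\<rceil>))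
                      (4 / (T0 * real (length D) ^ 2))))"

proof -
  interpret SA N nl nu h D t p T0 using assms by unfold_locales auto
  define W where "W = real (nu - nl)"
  have W1: "W \<ge> 1" unfolding W_def using assms(1) by simp
  define cc where "cc = min (1 / (real (nu - nl) * real N ^ nat \<lceil>real (nu - nl) / 2\<rceil>))
                      (4 / (T0 * real (length D) ^ 2))"
  have cc0: "cc \<ge> 0" unfolding cc_def using T0_pos by simp
  show ?thesis
  proof (cases "X = {}")
    case True
    then show ?thesis by (intro exI[of _ 1]) auto
  next
    case False
    have cX: "card X > 0" using False finite_search_space by (simp add: card_gt_0_iff)
    have N0: "N > 0" using assms(1,2) by simp
    have b0: "beta > 0" unfolding beta_def using cX N0 by simp
    have M0: "real (card X) * real N \<ge> 0" by simp
    obtain A where A0: "A > 0" and AB: "\<And>k::nat. k \<ge> 1 \<Longrightarrow>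
      sqrt (real (card X) * real N * ((2 + real k) * exp (- (beta * real k * (2 + real k) powr (- a))))) < A / ((real k / W) powr cc)"
      using analytic[OF M0 b0 a_nonneg a_lt1 cc0 W1] by blast
    show ?thesis
    proof (intro exI[of _ A] conjI ballI allI impI A0)
      fix init k assume init: "init \<in> X" and k: "nat \<lceil>real (nu - nl) / 2\<rceil> < k"
      have k1: "k \<ge> 1" using k by simp
      let ?P = "sa_run (cost N p t h D) (nbhd N nl nu) (\<lambda>m. T0 / ln (2 + real m)) init k"
      have ev: "{xs. \<exists>s\<in>set xs. is_global_min (cost N p t h D) (search_space N nl nu) s}
          = space (measure_pmf ?P) - {xs. \<not> (\<exists>s\<in>set xs. s \<in> Amin)}" by auto
      have "measure_pmf.prob ?P {xs. \<exists>s\<in>set xs. is_global_min (cost N p t h D) (search_space N nl nu) s}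
          = 1 - measure_pmf.prob ?P {xs. \<not> (\<exists>s\<in>set xs. s \<in> Amin)}"
        unfolding ev by (rule measure_pmf.prob_compl) simp
      moreover have "measure_pmf.prob ?P {xs. \<not> (\<exists>s\<in>set xs. s \<in> Amin)} < A / ((real k / W) powr cc)"
        using final_bound[OF init, of k] AB[OF k1] by linarith
      ultimately show "measure_pmf.prob ?P {xs. \<exists>s\<in>set xs. is_global_min (cost N p t h D) (search_space N nl nu) s}
           > 1 - A / ((real k / real (nu - nl)) powr
                 (min (1 / (real (nu - nl) * real N ^ nat \<lceil>real (nu - nl) / 2\<rceil>))
                      (4 / (T0 * real (length D) ^ 2))))"
        unfolding W_def cc_def by linarith
    qed
  qed
qed

end
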